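(* Let $k\ge 1$ be a fixed integer, and for each $q\ge 1$ let $f_q:\{0,1\}^q\to\{0,1,\ldots,2^q-1\}$ be the Hamming-distance-based bijection. Then \[ \lim_{q\to\infty} d_{\max,k}(f_q)=0 \quad\text{and}\quad \lim_{q\to\infty} d_{\mathrm{ave},k}(f_q)=0 . \]
   Context: For an integer $q\ge1$ and binary arrays $x_1,x_2\in\{0,1\}^q$, let $w_H(x)$ be the Hamming weight of $x$ (number of ones) and $d_H(x_1,x_2)$ the Hamming distance. Define a total order $\succeq$ on $\{0,1\}^q$ by: $b_1\succeq b_2$ iff either $w_H(b_1)>w_H(b_2)$, or $w_H(b_1)=w_H(b_2)$ and $b_1$ is lexicographically greater than or equal to $b_2$. The Hamming-distance-based bijection $f_q:\{0,1\}^q\to\{0,1,\ldots,2^q-1\}$ is the unique bijection such that for all $b_1,b_2$, $f_q(b_1)\ge f_q(b_2)\iff b_1\succeq b_2$ (so the all-zero array maps to $0$, the arrays of weight $1$ come next, etc.). For a bijection $f:\{0,1\}^q\to\{0,\ldots,2^q-1\}$ define the distortion $d(f,b_1,b_2)=|f(b_1)-f(b_2)|/2^q$. For a fixed integer $k\ge1$ and $b\in\{0,1\}^q$, let $N_k(b)=\{x\in\{0,1\}^q: 1\le d_H(b,x)\le k\}$, and set $d_{\max,k}(f,b)=\max_{x\in N_k(b)} d(f,b,x)$, $d_{\mathrm{ave},k}(f,b)=\frac{1}{|N_k(b)|}\sum_{x\in N_k(b)} d(f,b,x)$, $d_{\max,k}(f)=\max_{b\in\{0,1\}^q} d_{\max,k}(f,b)$,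 and $d_{\mathrm{ave},k}(f)=\frac{1}{2^q}\sum_{b\in\{0,1\}^q} d_{\mathrm{ave},k}(f,b)$. *)

theory Defs
  imports Complex_Main "HOL-Library.List_Lexorder"
begin

text \<open>Binary arrays of length q are represented as boolean lists of length q
  (True = 1, False = 0). Lexicographic order is the standard one from
  List_Lexorder with False < True, first entry most significant.\<close>

definition arrays :: "nat \<Rightarrow> bool list set" where
  "arrays q = {xs. length xs = q}"

definition hw :: "bool list \<Rightarrow> nat" where
  "hw xs = count_list xs True"

definition hd_dist :: "bool list \<Rightarrow> bool list \<Rightarrow> nat" where
  "hd_dist xs ys = card {i. i < length xs \<and> xs ! i \<noteq> ys ! i}"

definition succeq :: "bool list \<Rightarrow> bool list \<Rightarrow> bool" where
  "succeq b1 b2 \<longleftrightarrow> hw b1 > hw b2 \<or> (hw b1 = hw b2 \<and> b2 \<le> b1)"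

definition fH :: "nat \<Rightarrow> bool list \<Rightarrow> nat" where
  "fH q = (THE f. bij_betw f (arrays q) {0..<2^q}
      \<and> (\<forall>b1\<in>arrays q. \<forall>b2\<in>arrays q. f b1 \<ge> f b2 \<longleftrightarrow> succeq b1 b2)
      \<and> (\<forall>x. x \<notin> arrays q \<longrightarrow> f x = 0))"

definition distortion :: "nat \<Rightarrow> (bool list \<Rightarrow> nat) \<Rightarrow> bool list \<Rightarrow> bool list \<Rightarrow> real" where
  "distortion q f b1 b2 = \<bar>real (f b1) - real (f b2)\<bar> / 2 ^ q"

definition nbhd :: "nat \<Rightarrow> nat \<Rightarrow> bool list \<Rightarrow> bool list set" where
  "nbhd q k b = {x \<in> arrays q. 1 \<le> hd_dist b x \<and> hd_dist b x \<le> k}"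

definition dmax_at :: "nat \<Rightarrow> nat \<Rightarrow> (bool list \<Rightarrow> nat) \<Rightarrow> bool list \<Rightarrow> real" where
  "dmax_at q k f b = Max ((\<lambda>x. distortion q f b x) ` nbhd q k b)"

definition dave_at :: "nat \<Rightarrow> nat \<Rightarrow> (bool list \<Rightarrow> nat) \<Rightarrow> bool list \<Rightarrow> real" where
  "dave_at q k f b = (\<Sum>x\<in>nbhd q k b. distortion q f b x) / real (card (nbhd q k b))"

definition dmax :: "nat \<Rightarrow> nat \<Rightarrow> (bool list \<Rightarrow> nat) \<Rightarrow> real" where
  "dmax q k f = Max ((\<lambda>b. dmax_at q k f b) ` arrays q)"

definition dave :: "nat \<Rightarrow> nat \<Rightarrow> (bool list \<Rightarrow> nat) \<Rightarrow> real" where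
  "dave q k f = (\<Sum>b\<in>arrays q. dave_at q k f b) / 2 ^ q"

end

theory Submission
  imports Defs
begin

lemma arrays_eq: "arrays q = {xs. set xs \<subseteq> UNIV \<and> length xs = q}"
  by (simp add: arrays_def)

lemma finite_arrays: "finite (arrays q)"
  unfolding arrays_eq by (rule finite_lists_length_eq) simp

lemma card_arrays: "card (arrays q) = 2 ^ q"
  unfolding arrays_eq by (subst card_lists_length_eq) simp_all

lemma succeq_refl: "succeq b b" by (simp add: succeq_def)
lemma succeq_total: "succeq a b \<or> succeq b a" unfolding succeq_def by auto
lemma succeq_antisym: "succeq a b \<Longrightarrow> succeq b a \<Longrightarrow> a = b"
  unfolding succeq_def by auto
lemma succeq_trans: "succeq a b \<Longrightarrow> succeq b c \<Longrightarrow> succeq a c"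
  unfolding succeq_def by (auto intro: order_trans)

definition Pf :: "nat \<Rightarrow> (bool list \<Rightarrow> nat) \<Rightarrow> bool" where
  "Pf q f \<longleftrightarrow> bij_betw f (arrays q) {0..<2^q}
      \<and> (\<forall>b1\<in>arrays q. \<forall>b2\<in>arrays q. f b1 \<ge> f b2 \<longleftrightarrow> succeq b1 b2)
      \<and> (\<forall>x. x \<notin> arrays q \<longrightarrow> f x = 0)"

lemma rank_char:
  assumes bij: "bij_betw f (arrays q) {0..<2^q}"
    and ord: "\<forall>b1\<in>arrays q. \<forall>b2\<in>arrays q. f b1 \<ge> f b2 \<longleftrightarrow> succeq b1 b2"
    and b: "b \<in> arrays q"
  shows "f b = card {x\<in>arrays q. \<not> succeq x b}"
proof -
  have e: "{x\<in>arrays q. \<not> succeq x b} = {x\<in>arrays q. f x < f b}"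
    using ord b by (auto simp: not_le[symmetric])
  have fb: "f b < 2^q" using bij b by (auto simp: bij_betw_def)
  have "bij_betw f {x\<in>arrays q. f x < f b} {0..<f b}"
    unfolding bij_betw_def
  proof
    show "inj_on f {x \<in> arrays q. f x < f b}"
      using bij_betw_imp_inj_on[OF bij] by (rule inj_on_subset) auto
    show "f ` {x \<in> arrays q. f x < f b} = {0..<f b}"
    proof
      show "f ` {x \<in> arrays q. f x < f b} \<subseteq> {0..<f b}" by auto
      show "{0..<f b} \<subseteq> f ` {x \<in> arrays q. f x < f b}"
      proof
        fix y assume y: "y \<in> {0..<f b}"
        then have "y \<in> f ` arrays q" using bij fb by (auto simp: bij_betw_def)
        then obtain x where "x \<in> arrays q" "y = f x" by auto
        then show "y \<in> f ` {x \<in> arrays q. f x < f b}" using y by auto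
      qed
    qed
  qed
  then have "card {x\<in>arrays q. f x < f b} = f b" by (simp add: bij_betw_same_card)
  then show ?thesis using e by simp
qed

definition rk :: "nat \<Rightarrow> bool list \<Rightarrow> nat" where
  "rk q b = (if b \<in> arrays q then card {x\<in>arrays q. \<not> succeq x b} else 0)"

lemma rk_less: "b \<in> arrays q \<Longrightarrow> rk q b < 2^q"
proof -
  assume b: "b \<in> arrays q"
  have "{x\<in>arrays q. \<not> succeq x b} \<subset> arrays q" using b succeq_refl by auto
  then have "card {x\<in>arrays q. \<not> succeq x b} < card (arrays q)"
    by (rule psubset_card_mono[OF finite_arrays])
  then show ?thesis using b by (simp add: rk_def card_arrays)
qed

lemma rk_ord:
  assumes b1: "b1 \<in> arrays q" and b2: "b2 \<in> arrays q"
  shows "rk q b1 \<ge> rk q b2 \<longleftrightarrow> succeq b1 b2"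
proof
  assume s: "succeq b1 b2"
  have "{x\<in>arrays q. \<not> succeq x b2} \<subseteq> {x\<in>arrays q. \<not> succeq x b1}"
    using s succeq_trans by blast
  moreover have "finite {x\<in>arrays q. \<not> succeq x b1}" using finite_arrays by simp
  ultimately show "rk q b1 \<ge> rk q b2" using b1 b2
    by (simp add: rk_def card_mono)
next
  assume le: "rk q b1 \<ge> rk q b2"
  show "succeq b1 b2"
  proof (rule ccontr)
    assume ns: "\<not> succeq b1 b2"
    then have s: "succeq b2 b1" using succeq_total by blast
    have "{x\<in>arrays q. \<not> succeq x b1} \<subset> {x\<in>arrays q. \<not> succeq x b2}"
      using s ns b1 succeq_trans succeq_refl by blast
    moreover have "finite {x\<in>arrays q. \<not> succeq x b2}" using finite_arrays by simp
    ultimately have "rk q b1 < rk q b2" using b1 b2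
      by (simp add: rk_def psubset_card_mono)
    then show False using le by simp
  qed
qed

lemma Pf_rk: "Pf q (rk q)"
proof -
  have inj: "inj_on (rk q) (arrays q)"
    by (rule inj_onI) (metis rk_ord order_refl succeq_antisym)
  have sub: "rk q ` arrays q \<subseteq> {0..<2^q}" using rk_less by auto
  have "card (rk q ` arrays q) = card {0..<(2::nat)^q}"
    using card_image[OF inj] by (simp add: card_arrays)
  then have "rk q ` arrays q = {0..<2^q}"
    using sub by (intro card_subset_eq) auto
  then have "bij_betw (rk q) (arrays q) {0..<2^q}" using inj by (simp add: bij_betw_def)
  then show ?thesis unfolding Pf_def using rk_ord by (auto simp: rk_def)
qed

lemma Pf_unique: "Pf q f \<Longrightarrow> f = rk q"
proof
  fix x assume P: "Pf q f"
  show "f x = rk q x"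
  proof (cases "x \<in> arrays q")
    case True then show ?thesis using P rank_char[of f q x] by (simp add: Pf_def rk_def)
  next
    case False then show ?thesis using P by (simp add: Pf_def rk_def)
  qed
qed

lemma fH_rk: "fH q = rk q"
proof -
  have "fH q = (THE f. Pf q f)" unfolding fH_def Pf_def by simp
  also have "\<dots> = rk q" using Pf_rk Pf_unique by blast
  finally show ?thesis .
qed
lemma hw_card: "hw xs = card {i. i < length xs \<and> xs ! i}"
  by (simp add: hw_def count_list_eq_length_filter length_filter_conv_card eq_commute)

lemma hw_hd: assumes "length xs = length ys"
  shows "hw xs \<le> hw ys + hd_dist xs ys"
proof -
  have "{i. i < length xs \<and> xs ! i} \<subseteq> {i. i < length ys \<and> ys ! i} \<union> {i. i < length xs \<and> xs ! i \<noteq> ys ! i}"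
    using assms by auto
  then have "card {i. i < length xs \<and> xs ! i} \<le> card ({i. i < length ys \<and> ys ! i} \<union> {i. i < length xs \<and> xs ! i \<noteq> ys ! i})"
    by (intro card_mono) auto
  also have "\<dots> \<le> card {i. i < length ys \<and> ys ! i} + card {i. i < length xs \<and> xs ! i \<noteq> ys ! i}"
    by (rule card_Un_le)
  finally show ?thesis by (simp add: hw_card hd_dist_def)
qed

lemma hd_sym: "length xs = length ys \<Longrightarrow> hd_dist xs ys = hd_dist ys xs"
  unfolding hd_dist_def by (metis)

lemma card_hw_eq: "card {x\<in>arrays q. hw x = j} \<le> q choose j"
proof -
  let ?g = "\<lambda>xs. {i. i < q \<and> xs ! i}"
  have inj: "inj_on ?g {x\<in>arrays q. hw x = j}"
  proof (rule inj_onI)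
    fix xs ys assume xs: "xs \<in> {x\<in>arrays q. hw x = j}" and ys: "ys \<in> {x\<in>arrays q. hw x = j}"
      and e: "?g xs = ?g ys"
    show "xs = ys"
    proof (rule nth_equalityI)
      show "length xs = length ys" using xs ys by (simp add: arrays_def)
      fix i assume "i < length xs"
      then have "i < q" using xs by (simp add: arrays_def)
      then show "xs ! i = ys ! i" using e by blast
    qed
  qed
  have sub: "?g ` {x\<in>arrays q. hw x = j} \<subseteq> {B. B \<subseteq> {0..<q} \<and> card B = j}"
    by (auto simp: arrays_def hw_card)
  have "card {x\<in>arrays q. hw x = j} = card (?g ` {x\<in>arrays q. hw x = j})"
    using card_image[OF inj] by simp
  also have "\<dots> \<le> card {B. B \<subseteq> {0..<q} \<and> card B = j}"
    by (rule card_mono[OF _ sub]) simp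
  also have "\<dots> = q choose j" by (subst n_subsets) simp_all
  finally show ?thesis .
qed

definition LL :: "nat \<Rightarrow> nat \<Rightarrow> nat" where
  "LL q w = card {x\<in>arrays q. hw x < w}"

lemma LL_step: "LL q w2 \<le> LL q w1 + (w2 - w1) * (q choose (q div 2))"
proof -
  let ?M = "q choose (q div 2)"
  have "{x\<in>arrays q. hw x < w2} \<subseteq> {x\<in>arrays q. hw x < w1} \<union> (\<Union>j\<in>{w1..<w2}. {x\<in>arrays q. hw x = j})"
    by auto
  then have "LL q w2 \<le> card ({x\<in>arrays q. hw x < w1} \<union> (\<Union>j\<in>{w1..<w2}. {x\<in>arrays q. hw x = j}))"
    unfolding LL_def by (intro card_mono) (auto intro: finite_subset[OF _ finite_arrays])
  also have "\<dots> \<le> LL q w1 + card (\<Union>j\<in>{w1..<w2}. {x\<in>arrays q. hw x = j})"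
    unfolding LL_def by (rule card_Un_le)
  also have "card (\<Union>j\<in>{w1..<w2}. {x\<in>arrays q. hw x = j}) \<le> (\<Sum>j\<in>{w1..<w2}. card {x\<in>arrays q. hw x = j})"
    by (rule card_UN_le) simp
  also have "\<dots> \<le> (\<Sum>j\<in>{w1..<w2}. ?M)"
    by (intro sum_mono order_trans[OF card_hw_eq binomial_maximum])
  also have "\<dots> = (w2 - w1) * ?M" by simp
  finally show ?thesis by simp
qed

lemma rk_bounds:
  assumes b: "b \<in> arrays q"
  shows "LL q (hw b) \<le> rk q b" "rk q b < LL q (Suc (hw b))"
proof -
  have fin: "finite {x\<in>arrays q. \<not> succeq x b}" using finite_arrays by simp
  have "{x\<in>arrays q. hw x < hw b} \<subseteq> {x\<in>arrays q. \<not> succeq x b}"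
    by (auto simp: succeq_def)
  then show "LL q (hw b) \<le> rk q b" using b fin by (simp add: LL_def rk_def card_mono)
  have "{x\<in>arrays q. \<not> succeq x b} \<subset> {x\<in>arrays q. hw x < Suc (hw b)}"
    using b succeq_refl[of b] by (auto simp: succeq_def)
  then show "rk q b < LL q (Suc (hw b))" using b
    by (simp add: LL_def rk_def psubset_card_mono finite_arrays)
qed

lemma rk_diff:
  assumes b: "b \<in> arrays q" and x: "x \<in> arrays q" and h: "hd_dist b x \<le> k"
  shows "rk q b \<le> rk q x + (k+1) * (q choose (q div 2))"
proof -
  let ?M = "q choose (q div 2)"
  have l: "length b = length x" using b x by (simp add: arrays_def)
  have hw: "hw b \<le> hw x + k" using hw_hd[OF l] h by simp
  have "rk q b \<le> LL q (Suc (hw b))" using rk_bounds(2)[OF b] by simp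
  also have "\<dots> \<le> LL q (hw x) + (Suc (hw b) - hw x) * ?M" by (rule LL_step)
  also have "\<dots> \<le> rk q x + (k+1) * ?M"
    using rk_bounds(1)[OF x] hw by (intro add_mono mult_right_mono) auto
  finally show ?thesis .
qed

lemma rk_absdiff:
  assumes b: "b \<in> arrays q" and x: "x \<in> arrays q" and h: "hd_dist b x \<le> k"
  shows "\<bar>real (rk q b) - real (rk q x)\<bar> \<le> real ((k+1) * (q choose (q div 2)))"
proof -
  have l: "length b = length x" using b x by (simp add: arrays_def)
  have h2: "hd_dist x b \<le> k" using h hd_sym[OF l] by simp
  have 1: "rk q b \<le> rk q x + (k+1) * (q choose (q div 2))" by (rule rk_diff[OF b x h])
  have 2: "rk q x \<le> rk q b + (k+1) * (q choose (q div 2))" by (rule rk_diff[OF x b h2])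
  from 1 2 show ?thesis by (simp only: abs_le_iff) linarith
qed




lemma e_sym: "Suc (2*n) choose n = Suc (2*n) choose Suc n"
proof -
  have h: "Suc (2*n) - n = Suc n" by simp
  have "n \<le> Suc (2*n)" by simp
  from binomial_symmetric[OF this] show ?thesis by (simp only: h)
qed

lemma e_dbl: "Suc (Suc (2*n)) choose Suc n = 2 * (Suc (2*n) choose n)"
proof -
  have "Suc (Suc (2*n)) choose Suc n = (Suc (2*n) choose n) + (Suc (2*n) choose Suc n)"
    by (rule binomial_Suc_Suc)
  also have "\<dots> = (Suc (2*n) choose n) + (Suc (2*n) choose n)" by (simp only: e_sym)
  also have "\<dots> = 2 * (Suc (2*n) choose n)" by (simp only: mult_2)
  finally show ?thesis .
qed

lemma binom_step: "Suc n * (Suc (Suc (2*n)) choose Suc n) = 2 * (Suc (2*n) * (2*n choose n))"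
proof -
  have "Suc n * (Suc (Suc (2*n)) choose Suc n) = Suc n * (2 * (Suc (2*n) choose Suc n))"
    by (simp only: e_dbl e_sym)
  also have "\<dots> = 2 * (Suc n * (Suc (2*n) choose Suc n))" by (simp only: mult.left_commute)
  also have "\<dots> = 2 * (Suc (2*n) * (2*n choose n))" by (simp only: Suc_times_binomial)
  finally show ?thesis .
qed

lemma arith1:
  fixes c d n P :: nat
  assumes st: "Suc n * d = 2 * (Suc (2*n) * c)" and ih: "c^2 * (2*n+1) \<le> P"
  shows "d^2 * (Suc (Suc (2*n)) + 1) \<le> 16 * P"
proof -
  have "(Suc n)^2 * (d^2 * (2*n+3)) = (Suc n * d)^2 * (2*n+3)" by (simp only: power_mult_distrib mult.assoc)
  also have "\<dots> = (2 * (Suc (2*n) * c))^2 * (2*n+3)" using st by simp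
  also have "\<dots> = (4*(2*n+1)*(2*n+3)) * (c^2*(2*n+1))" by (simp add: power2_eq_square algebra_simps)
  also have "\<dots> \<le> (4*(2*n+1)*(2*n+3)) * P" using ih by (rule mult_left_mono) simp
  also have "\<dots> \<le> (16*(Suc n)^2) * P" by (intro mult_right_mono) (simp_all add: power2_eq_square algebra_simps)
  finally have "(Suc n)^2 * (d^2 * (2*n+3)) \<le> (Suc n)^2 * (16 * P)" by (simp add: algebra_simps)
  then have "d^2 * (2*n+3) \<le> 16 * P" by simp
  moreover have "Suc (Suc (2*n)) + 1 = 2*n+3" by simp
  ultimately show ?thesis by (simp only:)
qed

lemma cb_even: "(2*n choose n)^2 * (2*n+1) \<le> 16^n"
proof (induction n)
  case 0 then show ?case by simp
next
  case (Suc n)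
  have t: "2 * Suc n = Suc (Suc (2*n))" by simp
  have "(Suc (Suc (2*n)) choose Suc n)^2 * (Suc (Suc (2*n)) + 1) \<le> 16 * 16^n"
    by (rule arith1[OF binom_step Suc.IH])
  then show ?case by (simp only: t power_Suc)
qed

lemma arith2:
  fixes m n P :: nat
  assumes "(2*m)^2 * (Suc (Suc (2*n)) + 1) \<le> 16 * P"
  shows "m^2 * (Suc (2*n) + 1) \<le> 4 * P"
proof -
  have "4 * (m^2 * (Suc (2*n) + 1)) \<le> (2*m)^2 * (Suc (Suc (2*n)) + 1)"
    by (simp add: power2_eq_square algebra_simps)
  then show ?thesis using assms by simp
qed

lemma cb_bound: "(q choose (q div 2))^2 * (q+1) \<le> 4^q"
proof (cases "even q")
  case True
  then obtain n where q: "q = 2*n" by auto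
  have "(4::nat)^q = 16^n" unfolding q by (simp add: power_mult)
  moreover have "q div 2 = n" using q by simp
  ultimately show ?thesis using cb_even[of n] q by simp
next
  case False
  then obtain n where q: "q = Suc (2*n)" using oddE by fastforce
  have qd: "q div 2 = n" using q by simp
  have t: "2 * Suc n = Suc (Suc (2*n))" by simp
  have "(2 * Suc n choose Suc n)^2 * (2 * Suc n + 1) \<le> 16^Suc n" by (rule cb_even)
  then have "(2 * (Suc (2*n) choose n))^2 * (Suc (Suc (2*n)) + 1) \<le> 16 * 16^n"
    by (simp only: t e_dbl power_Suc)
  then have "(Suc (2*n) choose n)^2 * (Suc (2*n) + 1) \<le> 4 * 16^n" by (rule arith2)
  moreover have "(4::nat)^Suc (2*n) = 4 * 16^n" by (simp add: power_mult)
  ultimately show ?thesis unfolding qd unfolding q by simp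
qed

lemma sq_bound:
  fixes C q :: nat
  assumes "C^2 * (q+1) \<le> 4^q"
  shows "(real C / 2^q)^2 \<le> inverse (real (Suc q))"
proof -
  have "real (C^2 * (q+1)) \<le> real (4^q)" using assms by (rule of_nat_mono)
  moreover have "(4::real)^q = 2^q * 2^q" by (simp add: power_mult_distrib[symmetric])
  ultimately have h: "real C^2 * real (Suc q) \<le> 2^q * 2^q" by (simp add: algebra_simps)
  have "(real C / 2^q)^2 = real C^2 / (2^q * 2^q)" by (simp add: power_divide power2_eq_square)
  also have "\<dots> \<le> inverse (real (Suc q))"
    using h by (simp add: field_simps)
  finally show ?thesis .
qed

lemma cb_lim: "(\<lambda>q. real (q choose (q div 2)) / 2^q) \<longlonglongrightarrow> 0"
proof (rule real_tendsto_sandwich)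
  show "\<forall>\<^sub>F q in sequentially. 0 \<le> real (q choose (q div 2)) / 2^q" by simp
  show "\<forall>\<^sub>F q in sequentially. real (q choose (q div 2)) / 2^q \<le> sqrt (inverse (real (Suc q)))"
    by (intro always_eventually allI real_le_rsqrt sq_bound cb_bound)
  show "(\<lambda>q. 0) \<longlonglongrightarrow> (0::real)" by simp
  show "(\<lambda>q. sqrt (inverse (real (Suc q)))) \<longlonglongrightarrow> 0"
    using tendsto_real_sqrt[OF LIMSEQ_inverse_real_of_nat] by simp
qed



definition BB :: "nat \<Rightarrow> nat \<Rightarrow> real" where
  "BB k q = real ((k+1) * (q choose (q div 2))) / 2^q"

lemma BB_nonneg: "0 \<le> BB k q" by (simp add: BB_def)

lemma dist_le:
  assumes b: "b \<in> arrays q" and x: "x \<in> nbhd q k b"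
  shows "distortion q (fH q) b x \<le> BB k q"
proof -
  have x': "x \<in> arrays q" and h: "hd_dist b x \<le> k" using x by (auto simp: nbhd_def)
  show ?thesis unfolding distortion_def BB_def fH_rk
    by (rule divide_right_mono[OF rk_absdiff[OF b x' h]]) simp
qed

lemma dist_nonneg: "0 \<le> distortion q f b x" by (simp add: distortion_def)

lemma finite_nbhd: "finite (nbhd q k b)"
  unfolding nbhd_def using finite_arrays by simp

lemma nbhd_ne:
  assumes q: "q \<ge> 1" and k: "k \<ge> 1" and b: "b \<in> arrays q"
  shows "nbhd q k b \<noteq> {}"
proof -
  let ?x = "b[0 := \<not> b ! 0]"
  have lb: "length b = q" using b by (simp add: arrays_def)
  have "{i. i < length b \<and> b ! i \<noteq> ?x ! i} = {0}" using lb q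
    by (auto simp: nth_list_update)
  then have "hd_dist b ?x = 1" by (simp add: hd_dist_def)
  moreover have "?x \<in> arrays q" using lb by (simp add: arrays_def)
  ultimately have "?x \<in> nbhd q k b" using k by (simp add: nbhd_def)
  then show ?thesis by blast
qed

lemma dmax_at_bounds:
  assumes q: "q \<ge> 1" and k: "k \<ge> 1" and b: "b \<in> arrays q"
  shows "0 \<le> dmax_at q k (fH q) b \<and> dmax_at q k (fH q) b \<le> BB k q"
proof -
  have ne: "(\<lambda>x. distortion q (fH q) b x) ` nbhd q k b \<noteq> {}" using nbhd_ne[OF q k b] by simp
  have fin: "finite ((\<lambda>x. distortion q (fH q) b x) ` nbhd q k b)" using finite_nbhd by simp
  show ?thesis unfolding dmax_at_def
    using ne fin dist_le[OF b] dist_nonneg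
    by (auto simp: Max_le_iff Max_ge_iff)
qed

lemma dmax_bounds:
  assumes q: "q \<ge> 1" and k: "k \<ge> 1"
  shows "0 \<le> dmax q k (fH q) \<and> dmax q k (fH q) \<le> BB k q"
proof -
  have r: "replicate q False \<in> arrays q" by (simp add: arrays_def)
  have ne: "(\<lambda>b. dmax_at q k (fH q) b) ` arrays q \<noteq> {}" using r by blast
  have fin: "finite ((\<lambda>b. dmax_at q k (fH q) b) ` arrays q)" using finite_arrays by simp
  show ?thesis unfolding dmax_def
    using ne fin dmax_at_bounds[OF q k] r
    by (auto simp: Max_le_iff Max_ge_iff)
qed

lemma dave_at_bounds:
  assumes b: "b \<in> arrays q"
  shows "0 \<le> dave_at q k (fH q) b \<and> dave_at q k (fH q) b \<le> BB k q"
proof -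
  have s: "(\<Sum>x\<in>nbhd q k b. distortion q (fH q) b x) \<le> real (card (nbhd q k b)) * BB k q"
    using sum_bounded_above[of "nbhd q k b" "distortion q (fH q) b" "BB k q"] dist_le[OF b] by simp
  have s0: "0 \<le> (\<Sum>x\<in>nbhd q k b. distortion q (fH q) b x)" by (intro sum_nonneg dist_nonneg)
  show ?thesis
  proof (cases "card (nbhd q k b) = 0")
    case True then show ?thesis by (simp add: dave_at_def BB_nonneg)
  next
    case False
    then have "0 < real (card (nbhd q k b))" by simp
    then show ?thesis unfolding dave_at_def using s s0
      by (simp add: divide_le_eq mult.commute)
  qed
qed

lemma dave_bounds:
  shows "0 \<le> dave q k (fH q) \<and> dave q k (fH q) \<le> BB k q"
proof -
  have s: "(\<Sum>b\<in>arrays q. dave_at q k (fH q) b) \<le> real (card (arrays q)) * BB k q"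
    using sum_bounded_above[of "arrays q" "dave_at q k (fH q)" "BB k q"] dave_at_bounds by simp
  have s0: "0 \<le> (\<Sum>b\<in>arrays q. dave_at q k (fH q) b)" using dave_at_bounds by (intro sum_nonneg) simp
  show ?thesis unfolding dave_def using s s0 by (simp add: card_arrays divide_le_eq mult.commute)
qed

lemma BB_lim: "BB k \<longlonglongrightarrow> 0"
proof -
  have "(\<lambda>q. real (k+1) * (real (q choose (q div 2)) / 2^q)) \<longlonglongrightarrow> real (k+1) * 0"
    by (intro tendsto_mult tendsto_const cb_lim)
  moreover have "BB k = (\<lambda>q. real (k+1) * (real (q choose (q div 2)) / 2^q))"
    by (simp add: BB_def fun_eq_iff algebra_simps)
  ultimately show ?thesis by simp
qed

theorem theorem1:
  fixes k :: nat
  assumes "k \<ge> 1"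
  shows "(\<lambda>q. dmax q k (fH q)) \<longlonglongrightarrow> 0 \<and> (\<lambda>q. dave q k (fH q)) \<longlonglongrightarrow> 0"
proof
  show "(\<lambda>q. dmax q k (fH q)) \<longlonglongrightarrow> 0"
  proof (rule real_tendsto_sandwich[OF _ _ tendsto_const BB_lim])
    show "\<forall>\<^sub>F q in sequentially. 0 \<le> dmax q k (fH q)"
      using dmax_bounds[OF _ assms] by (intro eventually_sequentiallyI[of 1]) blast
    show "\<forall>\<^sub>F q in sequentially. dmax q k (fH q) \<le> BB k q"
      using dmax_bounds[OF _ assms] by (intro eventually_sequentiallyI[of 1]) blast
  qed
  show "(\<lambda>q. dave q k (fH q)) \<longlonglongrightarrow> 0"
  proof (rule real_tendsto_sandwich[OF _ _ tendsto_const BB_lim])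
    show "\<forall>\<^sub>F q in sequentially. 0 \<le> dave q k (fH q)"
      using dave_bounds by (intro always_eventually) blast
    show "\<forall>\<^sub>F q in sequentially. dave q k (fH q) \<le> BB k q"
      using dave_bounds by (intro always_eventually) blast
  qed
qed

end
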